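(* For every integer $N\ge4$, $$\frac{h_N'''(0)}{h_N(0)}-\frac{h_{N-1}'''(0)}{h_{N-1}(0)}-\frac32\left(\frac{h_N'(0)}{h_N(0)}\right)^2-\frac{21}{2}\left(\frac{h_{N-2}(0)}{h_{N-1}(0)}-\frac74\right)=0.$$
   Context: $h_N(z)={}_2F_1(-N+1,N;2N;1-z)=\sum_{r=1}^N H_N^{(r)}z^{r-1}$ with $H_N^{(r)}=\binom{N+r-2}{N-1}\binom{2N-1-r}{N-1}/\binom{3N-2}{N-1}$ (the ice-point boundary one-point generating function). *)

theory Defs
  imports "HOL-Computational_Algebra.Polynomial"
begin

text \<open>Coefficients H_N^(r) of the ice-point boundary one-point generating function.\<close>
definition Hcoef :: "nat \<Rightarrow> nat \<Rightarrow> real" where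
  "Hcoef N r = real ((N + r - 2) choose (N - 1)) * real ((2*N - 1 - r) choose (N - 1))
               / real ((3*N - 2) choose (N - 1))"

definition hpoly :: "nat \<Rightarrow> real poly" where
  "hpoly N = (\<Sum>r = 1..N. monom (Hcoef N r) (r - 1))"

end

theory Submission
  imports Defs
begin

lemma coeff_hpoly: "k \<le> N \<Longrightarrow> 2 \<le> N \<Longrightarrow> coeff (hpoly N) k = Hcoef N (k+1)"
proof -
  assume k: "k \<le> N" and N: "2 \<le> N"
  have "coeff (hpoly N) k = (\<Sum>r = 1..N. if r - 1 = k then Hcoef N r else 0)"
    unfolding hpoly_def by (simp add: coeff_sum coeff_monom)
  also have "\<dots> = (\<Sum>r \<in> {1..N} \<inter> {k+1}. Hcoef N r)"
    by (rule sum.mono_neutral_cong_right) auto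
  also have "\<dots> = Hcoef N (k+1)"
  proof (cases "k < N")
    case True
    then have "{1..N} \<inter> {k+1} = {k+1}" by auto
    then show ?thesis by simp
  next
    case False
    then have "k = N" using k by simp
    moreover have "{1..N} \<inter> {N+1} = {}" by auto
    moreover have "((2*N - 1 - (N+1)) choose (N - 1)) = 0"
      using N by (simp add: binomial_eq_0)
    ultimately show ?thesis by (simp add: Hcoef_def)
  qed
  finally show ?thesis .
qed

lemma d3: "poly ((pderiv ^^ 3) p) 0 = 6 * coeff p 3"
  by (simp add: numeral_3_eq_3 poly_0_coeff_0 coeff_pderiv)

lemma d1: "poly (pderiv p) 0 = coeff p 1"
  by (simp add: poly_0_coeff_0 coeff_pderiv)

lemma case4:
  "poly ((pderiv ^^ 3) (hpoly 4)) 0 / poly (hpoly 4) 0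
         - poly ((pderiv ^^ 3) (hpoly (4 - 1))) 0 / poly (hpoly (4 - 1)) 0
         - 3/2 * (poly (pderiv (hpoly 4)) 0 / poly (hpoly 4) 0)^2
         - 21/2 * (poly (hpoly (4 - 2)) 0 / poly (hpoly (4 - 1)) 0 - 7/4) = 0"
  unfolding d3 d1 unfolding poly_0_coeff_0
  by (simp add: coeff_hpoly Hcoef_def binomial_fact fact_numeral)

lemma alg:
  fixes x :: real assumes x: "x \<ge> 0"
  shows "2 * ((2 + x) * ((3 + x) * ((4 + x) * ((6 + x) * ((5 + x) * (7 + x)))))) /
     ((6 + 2 * x) * ((7 + 2 * x) * (8 + 2 * x))) -
     2 * ((1 + x) * ((2 + x) * ((3 + x) * ((4 + x) * ((6 + x) * (5 + x)))))) /
     ((4 + 2 * x) * ((6 + 2 * x) * (5 + 2 * x))) -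
     3 * ((5 + x) * (4 + x) * ((5 + x) * (4 + x))) /
     ((8 + 2 * x) * (8 + 2 * x)) =
     21 * ((3 + x) * ((10 + 3 * x) * ((9 + 3 * x) * (8 + 3 * x)))) /
     ((6 + 2 * x) * ((7 + 2 * x) * ((6 + 2 * x) * (5 + 2 * x)))) - 147 / 4"
proof -
  have h: "6 + 2*x \<noteq> 0" "7 + 2*x \<noteq> 0" "8 + 2*x \<noteq> 0" "4 + 2*x \<noteq> 0" "5 + 2*x \<noteq> 0" using x by auto
  show ?thesis by (simp add: divide_simps h del: distrib_left distrib_right) algebra
qed

theorem mainTheorem8:
  fixes N :: nat
  assumes "N \<ge> 4"
  shows "poly ((pderiv ^^ 3) (hpoly N)) 0 / poly (hpoly N) 0
         - poly ((pderiv ^^ 3) (hpoly (N - 1))) 0 / poly (hpoly (N - 1)) 0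
         - 3/2 * (poly (pderiv (hpoly N)) 0 / poly (hpoly N) 0)^2
         - 21/2 * (poly (hpoly (N - 2)) 0 / poly (hpoly (N - 1)) 0 - 7/4) = 0"
proof (cases "N = 4")
  case True
  then show ?thesis using case4 by simp
next
  case False
  obtain n where n: "N = n + 5" using assms False
    by (metis add.commute le_add_diff_inverse le_neq_implies_less Suc_leI numeral_eq_Suc pred_numeral_simps semiring_norm(26,27))
  have e: "N - 1 = n + 4" "N - 2 = n + 3" using n by auto
  have c: "poly (hpoly M) 0 = coeff (hpoly M) 0" for M by (simp add: poly_0_coeff_0)
  show ?thesis
    unfolding d3 d1 c e
    apply (simp add: coeff_hpoly n Hcoef_def binomial_fact)
    apply (simp add: numeral_eq_Suc add_Suc_right)
    using alg[of "real n"] by simp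
qed

end
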